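(* There exists $M_1>\sqrt{2(n-1)}$ with the following property. Let $f$ be a solution of $\frac{f''}{1+(f')^2}=\left(\frac r2-\frac{n-1}{r}\right)f'-\frac f2$ with $f(\sqrt{2(n-1)})>0$, and suppose $f'(r)\le 0$ for all $r\ge\sqrt{2(n-1)}$ in its domain. Then $f(r)<0$ whenever $r>M_1$ and $f(r)$ is defined.
   Context: $n\ge2$ is a fixed integer; $f$ is a real function of $r>0$ defined on an interval containing $\sqrt{2(n-1)}$ (curves $(f(r),r)$ with this equation are the profile geodesics written as graphs over the $r$-axis). *)

theory Defs
  imports "HOL-Analysis.Analysis"
begin

end

theory Submission
  imports Defs
begin

lemma mono_within:
  fixes g g' :: "real \<Rightarrow> real"
  assumes "a \<le> b"
    and d: "\<And>x. x \<in> {a..b} \<Longrightarrow> (g has_real_derivative g' x) (at x within {a..b})"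
    and nn: "\<And>x. x \<in> {a..b} \<Longrightarrow> g' x \<le> 0"
  shows "g b \<le> g a"
proof (rule DERIV_nonpos_imp_decreasing_open[OF assms(1)])
  fix x assume "a < x" "x < b"
  then have "(g has_real_derivative g' x) (at x)"
    using d[of x] at_within_Icc_at[of a x b] by auto
  then show "\<exists>y. (g has_real_derivative y) (at x) \<and> y \<le> 0" using nn[of x] \<open>a<x\<close> \<open>x<b\<close> by auto
next
  show "continuous_on {a..b} g"
    using d by (meson DERIV_continuous continuous_on_eq_continuous_within)
qed

theorem lemma2p5:
  fixes n :: nat
  assumes "n \<ge> 2"
  shows "\<exists>M1 > sqrt (2 * (real n - 1)).
    \<forall>(I :: real set) (f :: real \<Rightarrow> real) f' f''.
      is_interval I \<and> I \<subseteq> {0<..} \<and> sqrt (2 * (real n - 1)) \<in> I \<and>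
      (\<forall>r\<in>I. (f has_real_derivative f' r) (at r within I) \<and>
               (f' has_real_derivative f'' r) (at r within I) \<and>
               f'' r / (1 + (f' r)\<^sup>2) = (r / 2 - (real n - 1) / r) * f' r - f r / 2) \<and>
      f (sqrt (2 * (real n - 1))) > 0 \<and>
      (\<forall>r\<in>I. r \<ge> sqrt (2 * (real n - 1)) \<longrightarrow> f' r \<le> 0)
      \<longrightarrow> (\<forall>r\<in>I. r > M1 \<longrightarrow> f r < 0)"
proof -
  define r0 where "r0 = sqrt (2 * (real n - 1))"
  have r0sq: "r0\<^sup>2 = 2 * (real n - 1)" unfolding r0_def using assms by simp
  have r0pos: "r0 > 0" unfolding r0_def using assms by simp
  show ?thesis unfolding r0_def[symmetric]
  proof (intro exI[of _ "r0 + 2*pi"] conjI allI impI ballI)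
    show "r0 < r0 + 2*pi" by simp
    fix I :: "real set" and f f' f'' :: "real \<Rightarrow> real" and r
    assume H: "is_interval I \<and> I \<subseteq> {0<..} \<and> r0 \<in> I \<and>
      (\<forall>r\<in>I. (f has_real_derivative f' r) (at r within I) \<and>
               (f' has_real_derivative f'' r) (at r within I) \<and>
               f'' r / (1 + (f' r)\<^sup>2) = (r / 2 - (real n - 1) / r) * f' r - f r / 2) \<and>
      f r0 > 0 \<and> (\<forall>r\<in>I. r \<ge> r0 \<longrightarrow> f' r \<le> 0)"
      and rI: "r \<in> I" and rM: "r > r0 + 2*pi"
    define r1 where "r1 = r0 + 2*pi"
    have sub: "{r0..r} \<subseteq> I"
      using H rI by (auto simp: is_interval_1)
    have df: "\<And>x. x \<in> {r0..r} \<Longrightarrow> (f has_real_derivative f' x) (at x within I)"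
      and df': "\<And>x. x \<in> {r0..r} \<Longrightarrow> (f' has_real_derivative f'' x) (at x within I)"
      and eq: "\<And>x. x \<in> {r0..r} \<Longrightarrow> f'' x / (1 + (f' x)\<^sup>2) = (x / 2 - (real n - 1) / x) * f' x - f x / 2"
      and fneg: "\<And>x. x \<in> {r0..r} \<Longrightarrow> f' x \<le> 0"
      using H sub by auto
    show "f r < 0"
    proof (rule ccontr)
      assume "\<not> f r < 0"
      hence fr: "f r \<ge> 0" by simp
      have fpos: "f x \<ge> 0" if "x \<in> {r0..r}" for x
      proof -
        have "f r \<le> f x"
        proof (rule mono_within[of x r f f'])
          show "x \<le> r" using that by simp
          fix y assume y: "y \<in> {x..r}"
          hence "y \<in> {r0..r}" using that by auto
          have "{x..r} \<subseteq> I" using sub that by auto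
          thus "(f has_real_derivative f' y) (at y within {x..r})"
            using DERIV_subset[OF df[OF \<open>y \<in> {r0..r}\<close>]] by blast
          show "f' y \<le> 0" using fneg \<open>y \<in> {r0..r}\<close> by simp
        qed
        thus ?thesis using fr by simp
      qed
      have f''le: "f'' x \<le> - f x / 2" if "x \<in> {r0..r}" for x
      proof -
        have xpos: "x > 0" using that r0pos by auto
        have "x\<^sup>2 \<ge> r0\<^sup>2" using that r0pos by (intro power_mono) auto
        hence "x/2 - (real n - 1)/x = (x\<^sup>2 - 2*(real n - 1)) / (2*x)"
          using xpos by (simp add: field_simps power2_eq_square)
        also have "\<dots> \<ge> 0" using \<open>x\<^sup>2 \<ge> r0\<^sup>2\<close> r0sq xpos by simp
        finally have a: "x/2 - (real n - 1)/x \<ge> 0" .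
        have p: "1 + (f' x)\<^sup>2 > 0" by (simp add: add_pos_nonneg)
        have "f'' x = (1 + (f' x)\<^sup>2) * ((x / 2 - (real n - 1) / x) * f' x - f x / 2)"
          using eq[OF that] p by (simp add: field_simps)
        also have "\<dots> \<le> - f x / 2"
        proof -
          define X where "X = (x / 2 - (real n - 1) / x) * f' x - f x / 2"
          have X: "X \<le> - f x / 2" unfolding X_def
            using mult_nonneg_nonpos[OF a fneg[OF that]] by simp
          hence "X \<le> 0" using fpos[OF that] by simp
          hence "(f' x)\<^sup>2 * X \<le> 0" by (simp add: mult_nonneg_nonpos)
          hence "(1 + (f' x)\<^sup>2) * X \<le> X" by (simp add: algebra_simps)
          thus ?thesis using X unfolding X_def by linarith
        qed
        finally show ?thesis .
      qed
      define s where "s x = sin ((x - r0)/2)" for x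
      define c where "c x = cos ((x - r0)/2)/2" for x
      define W where "W x = f' x * s x - f x * c x" for x
      define W' where "W' x = f'' x * s x + f x * s x / 4" for x
      have r1r: "r1 \<le> r" using rM unfolding r1_def by simp
      have r01: "r0 \<le> r1" unfolding r1_def by simp
      have "W r1 \<le> W r0"
      proof (rule mono_within[of r0 r1 W W'])
        show "r0 \<le> r1" by fact
        fix x assume x: "x \<in> {r0..r1}"
        hence xr: "x \<in> {r0..r}" using r1r by auto
        have sub2: "{r0..r1} \<subseteq> I" using sub r1r by auto
        have d1: "(f has_real_derivative f' x) (at x within {r0..r1})"
          using DERIV_subset[OF df[OF xr] sub2] .
        have d2: "(f' has_real_derivative f'' x) (at x within {r0..r1})"
          using DERIV_subset[OF df'[OF xr] sub2] .
        have ds: "(s has_real_derivative c x) (at x within {r0..r1})"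
          unfolding s_def[abs_def] c_def by (auto intro!: derivative_eq_intros)
        have dc: "(c has_real_derivative (- s x / 4)) (at x within {r0..r1})"
          unfolding s_def c_def[abs_def] by (auto intro!: derivative_eq_intros)
        have "((\<lambda>x. f' x * s x - f x * c x) has_real_derivative
               (f'' x * s x + c x * f' x - (f' x * c x + (- s x / 4) * f x))) (at x within {r0..r1})"
          by (rule DERIV_diff[OF DERIV_mult[OF d2 ds] DERIV_mult[OF d1 dc]])
        moreover have "f'' x * s x + c x * f' x - (f' x * c x + (- s x / 4) * f x) = W' x"
          unfolding W'_def by (simp add: algebra_simps)
        ultimately show "(W has_real_derivative W' x) (at x within {r0..r1})"
          unfolding W_def[abs_def] by simp
        have "s x \<ge> 0" unfolding s_def using x unfolding r1_def by (intro sin_ge_zero) auto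
        hence m1: "f'' x * s x \<le> (- f x / 2) * s x" by (rule mult_right_mono[OF f''le[OF xr]])
        have m2: "f x * s x \<ge> 0" using fpos[OF xr] \<open>s x \<ge> 0\<close> by simp
        show "W' x \<le> 0" unfolding W'_def using m1 m2 by (simp add: algebra_simps)
      qed
      moreover have "W r0 = - f r0 / 2" unfolding W_def s_def c_def by simp
      moreover have "W r1 = f r1 / 2" unfolding W_def s_def c_def r1_def by simp
      moreover have "f r1 \<ge> 0" using fpos r1r r01 by auto
      ultimately show False using H by simp
    qed
  qed
qed

end
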